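(* Let $m\ge 3$. Let $H_2$ be the graph with vertices $v_1,\dots,v_6$ and edges $v_1v_2,v_2v_3,v_3v_4,v_4v_5,v_5v_6,v_6v_1,v_2v_5,v_3v_6$, and let $H_4$ be the graph with vertices $v_1,\dots,v_6$ and edges $v_1v_2,v_2v_3,v_3v_4,v_4v_5,v_5v_6,v_6v_1,v_2v_6,v_3v_5$ (each has exactly two vertices of degree $2$, namely $v_1$ and $v_4$). Let $G_1$ (respectively $G_2$) be the cubic graph constructed from the cycle $C_m$ by replacing each vertex with a copy of $H_4$ (respectively $H_2$), where each edge $uv$ of $C_m$ is replaced by an edge joining a degree-$2$ vertex of the copy for $u$ to a degree-$2$ vertex of the copy for $v$, each degree-$2$ vertex being used exactly once. Then (a) $G_1$ is a bridgeless, Class $1$ cubic graph with triangles; (b) $G_2$ is a bridgeless, Class $1$, triangle-free cubic graph; and (c) for $i=1,2$, $c_2(G_i)-\left\lceil\frac{|V(G_i)|+2}{4}\right\rceil=\left\lfloor\frac{m-1}{2}\right\rfloor$.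
   Context: A graph is bridgeless if it has no bridge. A graph of maximum degree $\Delta$ is Class $1$ if its chromatic index is $\Delta$ and Class $2$ if it is $\Delta+1$. For a graph $G=(V,E)$ and $S_0\subseteq V$, the irreversible $2$-threshold conversion process sets, for $t=1,2,\dots$, $S_t=S_{t-1}\cup\{v: v \text{ has at least } 2 \text{ neighbours in } S_{t-1}\}$; $S_0$ is a $2$-conversion set if $S_t=V$ for some $t$, and $c_2(G)$ is the minimum size of a $2$-conversion set. *)

theory Defs
  imports Complex_Main
begin

definition neighbours :: "'a set \<Rightarrow> ('a \<Rightarrow> 'a \<Rightarrow> bool) \<Rightarrow> 'a \<Rightarrow> 'a set" where
  "neighbours V E v = {u \<in> V. E v u}"

definition degree :: "'a set \<Rightarrow> ('a \<Rightarrow> 'a \<Rightarrow> bool) \<Rightarrow> 'a \<Rightarrow> nat" where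
  "degree V E v = card (neighbours V E v)"

definition simple_graph :: "'a set \<Rightarrow> ('a \<Rightarrow> 'a \<Rightarrow> bool) \<Rightarrow> bool" where
  "simple_graph V E \<longleftrightarrow> finite V \<and> (\<forall>u v. E u v \<longrightarrow> u \<in> V \<and> v \<in> V \<and> E v u \<and> u \<noteq> v)"

definition cubic :: "'a set \<Rightarrow> ('a \<Rightarrow> 'a \<Rightarrow> bool) \<Rightarrow> bool" where
  "cubic V E \<longleftrightarrow> simple_graph V E \<and> (\<forall>v\<in>V. degree V E v = 3)"

definition edges :: "'a set \<Rightarrow> ('a \<Rightarrow> 'a \<Rightarrow> bool) \<Rightarrow> 'a set set" where
  "edges V E = {{u, v} | u v. u \<in> V \<and> v \<in> V \<and> E u v}"

definition reachable :: "'a set \<Rightarrow> ('a \<Rightarrow> 'a \<Rightarrow> bool) \<Rightarrow> 'a \<Rightarrow> 'a \<Rightarrow> bool" where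
  "reachable V E u v = (\<lambda>x y. x \<in> V \<and> y \<in> V \<and> E x y)\<^sup>*\<^sup>* u v"

definition is_bridge :: "'a set \<Rightarrow> ('a \<Rightarrow> 'a \<Rightarrow> bool) \<Rightarrow> 'a \<Rightarrow> 'a \<Rightarrow> bool" where
  "is_bridge V E u v \<longleftrightarrow> u \<in> V \<and> v \<in> V \<and> E u v \<and>
     \<not> reachable V (\<lambda>x y. E x y \<and> {x, y} \<noteq> {u, v}) u v"

definition bridgeless :: "'a set \<Rightarrow> ('a \<Rightarrow> 'a \<Rightarrow> bool) \<Rightarrow> bool" where
  "bridgeless V E \<longleftrightarrow> (\<nexists>u v. is_bridge V E u v)"

definition max_degree :: "'a set \<Rightarrow> ('a \<Rightarrow> 'a \<Rightarrow> bool) \<Rightarrow> nat" where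
  "max_degree V E = Max (degree V E ` V)"

definition proper_edge_colouring ::
  "'a set \<Rightarrow> ('a \<Rightarrow> 'a \<Rightarrow> bool) \<Rightarrow> nat \<Rightarrow> ('a set \<Rightarrow> nat) \<Rightarrow> bool" where
  "proper_edge_colouring V E k c \<longleftrightarrow>
     (\<forall>e\<in>edges V E. c e < k) \<and>
     (\<forall>e\<in>edges V E. \<forall>f\<in>edges V E. e \<noteq> f \<and> e \<inter> f \<noteq> {} \<longrightarrow> c e \<noteq> c f)"

definition chromatic_index :: "'a set \<Rightarrow> ('a \<Rightarrow> 'a \<Rightarrow> bool) \<Rightarrow> nat" where
  "chromatic_index V E = (LEAST k. \<exists>c. proper_edge_colouring V E k c)"

definition class1 :: "'a set \<Rightarrow> ('a \<Rightarrow> 'a \<Rightarrow> bool) \<Rightarrow> bool" where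
  "class1 V E \<longleftrightarrow> chromatic_index V E = max_degree V E"

definition has_triangle :: "'a set \<Rightarrow> ('a \<Rightarrow> 'a \<Rightarrow> bool) \<Rightarrow> bool" where
  "has_triangle V E \<longleftrightarrow> (\<exists>a\<in>V. \<exists>b\<in>V. \<exists>c\<in>V. E a b \<and> E b c \<and> E a c)"

definition conv_step :: "'a set \<Rightarrow> ('a \<Rightarrow> 'a \<Rightarrow> bool) \<Rightarrow> 'a set \<Rightarrow> 'a set" where
  "conv_step V E S = S \<union> {v \<in> V. card {u \<in> S. E v u} \<ge> 2}"

definition conversion_set :: "'a set \<Rightarrow> ('a \<Rightarrow> 'a \<Rightarrow> bool) \<Rightarrow> 'a set \<Rightarrow> bool" where
  "conversion_set V E S0 \<longleftrightarrow> S0 \<subseteq> V \<and> (\<exists>t. (conv_step V E ^^ t) S0 = V)"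

definition c2 :: "'a set \<Rightarrow> ('a \<Rightarrow> 'a \<Rightarrow> bool) \<Rightarrow> nat" where
  "c2 V E = (LEAST k. \<exists>S. conversion_set V E S \<and> card S = k)"

definition cyc6 :: "nat set set" where
  "cyc6 = {{1,2},{2,3},{3,4},{4,5},{5,6},{6,1}}"

definition H2 :: "nat \<Rightarrow> nat \<Rightarrow> bool" where
  "H2 j k \<longleftrightarrow> {j, k} \<in> cyc6 \<union> {{2,5},{3,6}}"

definition H4 :: "nat \<Rightarrow> nat \<Rightarrow> bool" where
  "H4 j k \<longleftrightarrow> {j, k} \<in> cyc6 \<union> {{2,6},{3,5}}"

text \<open>Vertex (i, j) is vertex v_j of the i-th copy, i < m.\<close>
definition ring_V :: "nat \<Rightarrow> (nat \<times> nat) set" where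
  "ring_V m = {0..<m} \<times> {1..6}"

text \<open>Copies are placed along the cycle C_m = 0,1,...,m-1,0; the edge between
  copies i and i+1 (mod m) joins v_4 of copy i to v_1 of copy i+1.\<close>
definition ring_E :: "(nat \<Rightarrow> nat \<Rightarrow> bool) \<Rightarrow> nat \<Rightarrow> nat \<times> nat \<Rightarrow> nat \<times> nat \<Rightarrow> bool" where
  "ring_E H m x y \<longleftrightarrow> x \<in> ring_V m \<and> y \<in> ring_V m \<and>
     ((fst x = fst y \<and> H (snd x) (snd y)) \<or>
      (snd x = 4 \<and> snd y = 1 \<and> fst y = (fst x + 1) mod m) \<or>
      (snd x = 1 \<and> snd y = 4 \<and> fst x = (fst y + 1) mod m))"

abbreviation "G1_E m \<equiv> ring_E H4 m"
abbreviation "G2_E m \<equiv> ring_E H2 m"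

end

theory Submission
  imports Defs
begin


definition nx :: "nat \<Rightarrow> nat \<Rightarrow> nat" where "nx m i = (i+1) mod m"
definition pr :: "nat \<Rightarrow> nat \<Rightarrow> nat" where "pr m i = (i+m-1) mod m"

lemma pr_iff:
  assumes "i < m" "i' < m"
  shows "(i = (i'+1) mod m) \<longleftrightarrow> (i' = pr m i)"
proof (cases "i' + 1 < m")
  case True
  then show ?thesis using assms unfolding pr_def
    by (cases i) (auto simp: mod_if)
next
  case False
  then have "i' = m - 1" using assms by auto
  then show ?thesis using assms unfolding pr_def
    by (cases i) (auto simp: mod_if)
qed

lemma nx_lt: "i < m \<Longrightarrow> nx m i < m" unfolding nx_def by simp
lemma pr_lt: "i < m \<Longrightarrow> pr m i < m" unfolding pr_def by simp

lemma ring_E_iff: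
  "ring_E H m (i,j) y \<longleftrightarrow> i < m \<and> j \<in> {1..6} \<and> fst y < m \<and> snd y \<in> {1..6} \<and>
     ((fst y = i \<and> H j (snd y)) \<or> (j = 4 \<and> y = (nx m i, 1)) \<or> (j = 1 \<and> y = (pr m i, 4)))"
proof (cases y)
  case (Pair a b)
  show ?thesis
  proof (cases "i < m \<and> a < m")
    case True
    then have "(i = (a+1) mod m) \<longleftrightarrow> (a = pr m i)" using pr_iff by blast
    then show ?thesis using Pair True unfolding ring_E_def ring_V_def nx_def by auto
  next
    case False
    then show ?thesis using Pair unfolding ring_E_def ring_V_def by auto
  qed
qed

lemma H4_iff: "H4 j k \<longleftrightarrow> (j=1\<and>k=2) \<or> (j=2\<and>k=1) \<or> (j=2\<and>k=3) \<or> (j=3\<and>k=2) \<or>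
   (j=3\<and>k=4) \<or> (j=4\<and>k=3) \<or> (j=4\<and>k=5) \<or> (j=5\<and>k=4) \<or> (j=5\<and>k=6) \<or> (j=6\<and>k=5) \<or>
   (j=6\<and>k=1) \<or> (j=1\<and>k=6) \<or> (j=2\<and>k=6) \<or> (j=6\<and>k=2) \<or> (j=3\<and>k=5) \<or> (j=5\<and>k=3)"
  by (auto simp: H4_def cyc6_def doubleton_eq_iff)

lemma H2_iff: "H2 j k \<longleftrightarrow> (j=1\<and>k=2) \<or> (j=2\<and>k=1) \<or> (j=2\<and>k=3) \<or> (j=3\<and>k=2) \<or>
   (j=3\<and>k=4) \<or> (j=4\<and>k=3) \<or> (j=4\<and>k=5) \<or> (j=5\<and>k=4) \<or> (j=5\<and>k=6) \<or> (j=6\<and>k=5) \<or>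
   (j=6\<and>k=1) \<or> (j=1\<and>k=6) \<or> (j=2\<and>k=5) \<or> (j=5\<and>k=2) \<or> (j=3\<and>k=6) \<or> (j=6\<and>k=3)"
  by (auto simp: H2_def cyc6_def doubleton_eq_iff)

lemma G1_1: "G1_E m (i,1) y \<longleftrightarrow> i < m \<and> y \<in> {(i,2),(i,6),(pr m i,4)}"
  by (cases y) (simp add: ring_E_iff H4_iff; auto simp: pr_lt nx_lt)
lemma G1_2: "G1_E m (i,2) y \<longleftrightarrow> i < m \<and> y \<in> {(i,1),(i,3),(i,6)}"
  by (cases y) (simp add: ring_E_iff H4_iff; auto simp: pr_lt nx_lt)
lemma G1_3: "G1_E m (i,3) y \<longleftrightarrow> i < m \<and> y \<in> {(i,2),(i,4),(i,5)}"
  by (cases y) (simp add: ring_E_iff H4_iff; auto simp: pr_lt nx_lt)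
lemma G1_4: "G1_E m (i,4) y \<longleftrightarrow> i < m \<and> y \<in> {(i,3),(i,5),(nx m i,1)}"
  by (cases y) (simp add: ring_E_iff H4_iff; auto simp: pr_lt nx_lt)
lemma G1_5: "G1_E m (i,5) y \<longleftrightarrow> i < m \<and> y \<in> {(i,4),(i,6),(i,3)}"
  by (cases y) (simp add: ring_E_iff H4_iff; auto simp: pr_lt nx_lt)
lemma G1_6: "G1_E m (i,6) y \<longleftrightarrow> i < m \<and> y \<in> {(i,1),(i,5),(i,2)}"
  by (cases y) (simp add: ring_E_iff H4_iff; auto simp: pr_lt nx_lt)
lemma G1_out: "j \<notin> {1..6} \<Longrightarrow> \<not> G1_E m (i,j) y"
  by (auto simp: ring_E_iff)
lemmas G1_simps = G1_1 G1_1[unfolded One_nat_def] G1_2 G1_3 G1_4 G1_5 G1_6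
lemma G2_1: "G2_E m (i,1) y \<longleftrightarrow> i < m \<and> y \<in> {(i,2),(i,6),(pr m i,4)}"
  by (cases y) (simp add: ring_E_iff H2_iff; auto simp: pr_lt nx_lt)
lemma G2_2: "G2_E m (i,2) y \<longleftrightarrow> i < m \<and> y \<in> {(i,1),(i,3),(i,5)}"
  by (cases y) (simp add: ring_E_iff H2_iff; auto simp: pr_lt nx_lt)
lemma G2_3: "G2_E m (i,3) y \<longleftrightarrow> i < m \<and> y \<in> {(i,2),(i,4),(i,6)}"
  by (cases y) (simp add: ring_E_iff H2_iff; auto simp: pr_lt nx_lt)
lemma G2_4: "G2_E m (i,4) y \<longleftrightarrow> i < m \<and> y \<in> {(i,3),(i,5),(nx m i,1)}"
  by (cases y) (simp add: ring_E_iff H2_iff; auto simp: pr_lt nx_lt)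
lemma G2_5: "G2_E m (i,5) y \<longleftrightarrow> i < m \<and> y \<in> {(i,4),(i,6),(i,2)}"
  by (cases y) (simp add: ring_E_iff H2_iff; auto simp: pr_lt nx_lt)
lemma G2_6: "G2_E m (i,6) y \<longleftrightarrow> i < m \<and> y \<in> {(i,1),(i,5),(i,3)}"
  by (cases y) (simp add: ring_E_iff H2_iff; auto simp: pr_lt nx_lt)
lemma G2_out: "j \<notin> {1..6} \<Longrightarrow> \<not> G2_E m (i,j) y"
  by (auto simp: ring_E_iff)
lemmas G2_simps = G2_1 G2_1[unfolded One_nat_def] G2_2 G2_3 G2_4 G2_5 G2_6

lemma ring_E_V: "ring_E H m x y \<Longrightarrow> x \<in> ring_V m \<and> y \<in> ring_V m"
  by (simp add: ring_E_def)

lemma ring_simple: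
  assumes "\<And>j k. H j k \<Longrightarrow> H k j" "\<And>j. \<not> H j j"
  shows "simple_graph (ring_V m) (ring_E H m)"
  unfolding simple_graph_def
proof (intro conjI allI impI)
  show "finite (ring_V m)" by (simp add: ring_V_def)
  fix u v assume e: "ring_E H m u v"
  then show "u \<in> ring_V m" "v \<in> ring_V m" by (auto simp: ring_E_def)
  show "ring_E H m v u" using e assms(1) by (auto simp: ring_E_def)
  show "u \<noteq> v" using e assms(2) by (auto simp: ring_E_def)
qed

lemma H4_sym: "H4 j k \<Longrightarrow> H4 k j" by (auto simp: H4_def insert_commute)
lemma H2_sym: "H2 j k \<Longrightarrow> H2 k j" by (auto simp: H2_def insert_commute)
lemma H4_irr: "\<not> H4 j j" by (simp add: H4_iff)
lemma H2_irr: "\<not> H2 j j" by (simp add: H2_iff)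

lemma G1_simple: "simple_graph (ring_V m) (G1_E m)" by (rule ring_simple[OF H4_sym H4_irr])
lemma G2_simple: "simple_graph (ring_V m) (G2_E m)" by (rule ring_simple[OF H2_sym H2_irr])

lemma nbr_eq: "neighbours (ring_V m) (ring_E H m) v = {u. ring_E H m v u}"
  by (auto simp: neighbours_def ring_E_def)

lemma six: "(j::nat) \<in> {1..6} \<Longrightarrow> j \<in> {1,2,3,4,5,6}"
  by (auto simp: eval_nat_numeral le_Suc_eq)

lemma ringV_cases: "v \<in> ring_V m \<Longrightarrow> (\<And>i j. v = (i,j) \<Longrightarrow> i < m \<Longrightarrow> j \<in> {1,2,3,4,5,6} \<Longrightarrow> P) \<Longrightarrow> P"
proof -
  assume v: "v \<in> ring_V m" and P: "\<And>i j. v = (i,j) \<Longrightarrow> i < m \<Longrightarrow> j \<in> {1,2,3,4,5,6} \<Longrightarrow> P"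
  obtain i j where ij: "v = (i,j)" by (cases v)
  then have "i < m" "j \<in> {1..6}" using v by (auto simp: ring_V_def)
  then show P using P[OF ij] six by blast
qed

lemma set3: "{u. u = a \<or> u = b \<or> u = c} = {a,b,c}" by auto

lemma G1_deg: "v \<in> ring_V m \<Longrightarrow> degree (ring_V m) (G1_E m) v = 3"
  apply (erule ringV_cases)
  apply (simp add: degree_def nbr_eq)
  apply (elim disjE; simp add: G1_simps set3)
  done

lemma G2_deg: "v \<in> ring_V m \<Longrightarrow> degree (ring_V m) (G2_E m) v = 3"
  apply (erule ringV_cases)
  apply (simp add: degree_def nbr_eq)
  apply (elim disjE; simp add: G2_simps set3)
  done

lemma G1_cubic: "cubic (ring_V m) (G1_E m)"
  using G1_simple G1_deg by (simp add: cubic_def)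
lemma G2_cubic: "cubic (ring_V m) (G2_E m)"
  using G2_simple G2_deg by (simp add: cubic_def)

lemma G1_tri: "0 < m \<Longrightarrow> has_triangle (ring_V m) (G1_E m)"
  unfolding has_triangle_def
  apply (rule bexI[of _ "(0,1)"], rule bexI[of _ "(0,2)"], rule bexI[of _ "(0,6)"])
  by (auto simp: G1_simps ring_V_def)

definition Q2 :: "nat \<Rightarrow> nat \<Rightarrow> bool" where
  "Q2 j k \<longleftrightarrow> H2 j k \<or> (j = 4 \<and> k = 1) \<or> (j = 1 \<and> k = 4)"

lemma G2_Q2: "G2_E m x y \<Longrightarrow> Q2 (snd x) (snd y)"
  by (cases x) (auto simp: ring_E_iff Q2_def)

lemma Q2_range: "Q2 a b \<Longrightarrow> a \<in> {1,2,3,4,5,6} \<and> b \<in> {1,2,3,4,5,6}"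
  unfolding Q2_def H2_iff by auto

lemma Q2_notri: "\<not> (Q2 a b \<and> Q2 b c \<and> Q2 a c)"
proof
  assume h: "Q2 a b \<and> Q2 b c \<and> Q2 a c"
  then have "a \<in> {1,2,3,4,5,6}" "b \<in> {1,2,3,4,5,6}" "c \<in> {1,2,3,4,5,6}" using Q2_range by blast+
  then show False using h
    by (simp only: insert_iff empty_iff simp_thms) (elim disjE; simp add: Q2_def H2_iff)
qed

lemma G2_notri: "\<not> has_triangle (ring_V m) (G2_E m)"
  unfolding has_triangle_def using G2_Q2 Q2_notri by blast


definition col1 :: "nat set \<Rightarrow> nat" where
  "col1 S = (if S \<in> {{1,4},{2,6},{3,5}} then 0 else if S \<in> {{1,2},{3,4},{5,6}} then 1 else 2)"
definition col2 :: "nat set \<Rightarrow> nat" where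
  "col2 S = (if S \<in> {{1,4},{2,5},{3,6}} then 0 else if S \<in> {{1,2},{3,4},{5,6}} then 1 else 2)"

lemma G1_col_loc: "G1_E m x y \<Longrightarrow> G1_E m x z \<Longrightarrow> y \<noteq> z \<Longrightarrow>
   col1 (snd ` {x,y}) \<noteq> col1 (snd ` {x,z})"
proof -
  assume a: "G1_E m x y" "G1_E m x z" "y \<noteq> z"
  then have "x \<in> ring_V m" by (simp add: ring_E_def)
  then show ?thesis
  proof (rule ringV_cases)
    fix i j assume x: "x = (i,j)" "i < m" "j \<in> {1,2,3,4,5,6}"
    then show ?thesis using a
      by (simp only: insert_iff empty_iff simp_thms) (elim disjE; simp add: G1_simps; elim disjE; simp add: col1_def doubleton_eq_iff)
  qed
qed

lemma G2_col_loc: "G2_E m x y \<Longrightarrow> G2_E m x z \<Longrightarrow> y \<noteq> z \<Longrightarrow>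
   col2 (snd ` {x,y}) \<noteq> col2 (snd ` {x,z})"
proof -
  assume a: "G2_E m x y" "G2_E m x z" "y \<noteq> z"
  then have "x \<in> ring_V m" by (simp add: ring_E_def)
  then show ?thesis
  proof (rule ringV_cases)
    fix i j assume x: "x = (i,j)" "i < m" "j \<in> {1,2,3,4,5,6}"
    then show ?thesis using a
      by (simp only: insert_iff empty_iff simp_thms) (elim disjE; simp add: G2_simps; elim disjE; simp add: col2_def doubleton_eq_iff)
  qed
qed

lemma proper_from_local:
  assumes sym: "\<And>x y. E x y \<Longrightarrow> E y x"
    and loc: "\<And>x y z. E x y \<Longrightarrow> E x z \<Longrightarrow> y \<noteq> z \<Longrightarrow> c {x,y} \<noteq> c {x,z}"
    and bd: "\<And>e. c e < k"
  shows "proper_edge_colouring V E k c"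
  unfolding proper_edge_colouring_def
proof (intro conjI ballI impI)
  fix e f assume e: "e \<in> edges V E" and f: "f \<in> edges V E" and ne: "e \<noteq> f \<and> e \<inter> f \<noteq> {}"
  obtain a b where ab: "e = {a,b}" "E a b" using e by (auto simp: edges_def)
  obtain p q where pq: "f = {p,q}" "E p q" using f by (auto simp: edges_def)
  obtain x where x: "x \<in> e" "x \<in> f" using ne by blast
  obtain y where y: "e = {x,y}" "E x y" using ab x sym by (auto simp: insert_commute)
  obtain z where z: "f = {x,z}" "E x z" using pq x sym by (auto simp: insert_commute)
  have "y \<noteq> z" using y z ne by auto
  then show "c e \<noteq> c f" using loc y z by simp
qed (simp add: bd)

lemma G1_ex3: "\<exists>c. proper_edge_colouring (ring_V m) (G1_E m) 3 c"
proof
  show "proper_edge_colouring (ring_V m) (G1_E m) 3 (\<lambda>e. col1 (snd ` e))"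
  proof (rule proper_from_local)
    fix x y assume "G1_E m x y" then show "G1_E m y x"
      using G1_simple[of m] unfolding simple_graph_def by blast
  next
    fix x y z assume "G1_E m x y" "G1_E m x z" "y \<noteq> z"
    then show "col1 (snd ` {x,y}) \<noteq> col1 (snd ` {x,z})" by (rule G1_col_loc)
  next
    fix e show "col1 (snd ` e) < 3" by (simp add: col1_def)
  qed
qed

lemma G2_ex3: "\<exists>c. proper_edge_colouring (ring_V m) (G2_E m) 3 c"
proof
  show "proper_edge_colouring (ring_V m) (G2_E m) 3 (\<lambda>e. col2 (snd ` e))"
  proof (rule proper_from_local)
    fix x y assume "G2_E m x y" then show "G2_E m y x"
      using G2_simple[of m] unfolding simple_graph_def by blast
  next
    fix x y z assume "G2_E m x y" "G2_E m x z" "y \<noteq> z"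
    then show "col2 (snd ` {x,y}) \<noteq> col2 (snd ` {x,z})" by (rule G2_col_loc)
  next
    fix e show "col2 (snd ` e) < 3" by (simp add: col2_def)
  qed
qed

lemma three_distinct: "(a::nat) < k \<Longrightarrow> b < k \<Longrightarrow> c < k \<Longrightarrow> a \<noteq> b \<Longrightarrow> a \<noteq> c \<Longrightarrow> b \<noteq> c \<Longrightarrow> 3 \<le> k"
proof -
  assume h: "a < k" "b < k" "c < k" "a \<noteq> b" "a \<noteq> c" "b \<noteq> c"
  have "card {a,b,c} \<le> card {..<k}" by (rule card_mono) (use h in auto)
  then show ?thesis using h by simp
qed

lemma lower3:
  assumes "proper_edge_colouring V E k c" "x \<in> V" "y1 \<in> V" "y2 \<in> V" "y3 \<in> V"
    "E x y1" "E x y2" "E x y3" "y1 \<noteq> y2" "y1 \<noteq> y3" "y2 \<noteq> y3"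
  shows "3 \<le> k"
proof -
  have e: "{x,y1} \<in> edges V E" "{x,y2} \<in> edges V E" "{x,y3} \<in> edges V E"
    using assms by (auto simp: edges_def)
  have d: "{x,y1} \<noteq> {x,y2}" "{x,y1} \<noteq> {x,y3}" "{x,y2} \<noteq> {x,y3}"
    using assms(9-11) by (auto simp: doubleton_eq_iff)
  have P: "\<And>e f. e \<in> edges V E \<Longrightarrow> f \<in> edges V E \<Longrightarrow> e \<noteq> f \<Longrightarrow> e \<inter> f \<noteq> {} \<Longrightarrow> c e \<noteq> c f"
    and B: "\<And>e. e \<in> edges V E \<Longrightarrow> c e < k"
    using assms(1) unfolding proper_edge_colouring_def by auto
  have "c {x,y1} \<noteq> c {x,y2}" "c {x,y1} \<noteq> c {x,y3}" "c {x,y2} \<noteq> c {x,y3}"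
    by (rule P; use e d in auto)+
  moreover have "c {x,y1} < k" "c {x,y2} < k" "c {x,y3} < k"
    by (rule B; use e in auto)+
  ultimately show ?thesis using three_distinct by blast
qed

lemma G1_lower: "0 < m \<Longrightarrow> proper_edge_colouring (ring_V m) (G1_E m) k c \<Longrightarrow> 3 \<le> k"
  apply (erule lower3[of _ _ _ _ "(0,1)" "(0,2)" "(0,6)" "(pr m 0, 4)"])
  by (auto simp: ring_V_def G1_simps pr_lt)

lemma G2_lower: "0 < m \<Longrightarrow> proper_edge_colouring (ring_V m) (G2_E m) k c \<Longrightarrow> 3 \<le> k"
  apply (erule lower3[of _ _ _ _ "(0,1)" "(0,2)" "(0,6)" "(pr m 0, 4)"])
  by (auto simp: ring_V_def G2_simps pr_lt)

lemma maxdeg3: "0 < m \<Longrightarrow> (\<And>v. v \<in> ring_V m \<Longrightarrow> degree (ring_V m) E v = 3) \<Longrightarrow> max_degree (ring_V m) E = 3"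
proof -
  assume m: "0 < m" and d: "\<And>v. v \<in> ring_V m \<Longrightarrow> degree (ring_V m) E v = 3"
  have "(0,1) \<in> ring_V m" using m by (simp add: ring_V_def)
  then have "degree (ring_V m) E ` ring_V m = {3}" using d by auto
  then show ?thesis by (simp add: max_degree_def)
qed

lemma G1_class1: "0 < m \<Longrightarrow> class1 (ring_V m) (G1_E m)"
  unfolding class1_def chromatic_index_def
  apply (simp add: maxdeg3 G1_deg)
  apply (rule Least_equality)
  using G1_ex3 G1_lower by auto

lemma G2_class1: "0 < m \<Longrightarrow> class1 (ring_V m) (G2_E m)"
  unfolding class1_def chromatic_index_def
  apply (simp add: maxdeg3 G2_deg)
  apply (rule Least_equality)
  using G2_ex3 G2_lower by auto


lemma path1: "T a b \<Longrightarrow> T\<^sup>*\<^sup>* a b" by auto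
lemma path2: "T a b \<Longrightarrow> T b c \<Longrightarrow> T\<^sup>*\<^sup>* a c" by auto
lemma path3: "T a b \<Longrightarrow> T b c \<Longrightarrow> T c d \<Longrightarrow> T\<^sup>*\<^sup>* a d"
  by (meson rtranclp.rtrancl_into_rtrancl rtranclp.rtrancl_refl)

lemma nx_pr: "i < m \<Longrightarrow> nx m (pr m i) = i"
  unfolding nx_def pr_def by (cases i) (auto simp: mod_Suc_eq mod_if)

lemma mod_ne: assumes "(i::nat) < m" "d + 1 < m" shows "(i + 1 + d) mod m \<noteq> i"
proof (cases "i + 1 + d < m")
  case True
  then have "(i + 1 + d) mod m = i + 1 + d" by (rule mod_less)
  then show ?thesis by simp
next
  case False
  then have "(i + 1 + d) mod m = (i + 1 + d - m) mod m" by (simp add: le_mod_geq)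
  also have "\<dots> = i + 1 + d - m" using assms by simp
  finally show ?thesis using assms False by simp
qed

lemma ring_reach:
  assumes H: "H 1 2" "H 2 3" "H 3 4" and i: "i < m"
  shows "reachable (ring_V m) (\<lambda>x y. ring_E H m x y \<and> {x,y} \<noteq> {(i,4),(nx m i,1)}) (nx m i,1) (i,4)"
proof -
  define T where "T = (\<lambda>x y. x \<in> ring_V m \<and> y \<in> ring_V m \<and> (ring_E H m x y \<and> {x,y} \<noteq> {(i,4),(nx m i,1)}))"
  have inner: "T\<^sup>*\<^sup>* (p,1) (p,4)" if p: "p < m" for p
    by (rule path3[of _ _ "(p,2)" "(p,3)"]) (use p H in \<open>auto simp: T_def ring_E_iff ring_V_def doubleton_eq_iff\<close>)
  have step: "T ((i+1+d) mod m, 4) ((i+1+Suc d) mod m, 1)" if d: "Suc d < m" for d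
  proof -
    have "((i+1+d) mod m + 1) mod m = (i+1+Suc d) mod m" by (simp add: mod_Suc_eq)
    moreover have "(i+1+d) mod m \<noteq> i" using mod_ne[OF i, of d] d by simp
    ultimately show ?thesis using i d by (auto simp: T_def ring_E_def ring_V_def doubleton_eq_iff)
  qed
  have main: "d < m \<Longrightarrow> T\<^sup>*\<^sup>* (nx m i, 1) ((i+1+d) mod m, 4)" for d
  proof (induction d)
    case 0
    then show ?case using inner[of "nx m i"] i by (simp add: nx_def)
  next
    case (Suc d)
    then have "T\<^sup>*\<^sup>* (nx m i, 1) ((i+1+d) mod m, 4)" by simp
    moreover have "T ((i+1+d) mod m, 4) ((i+1+Suc d) mod m, 1)" using step Suc by simp
    moreover have "T\<^sup>*\<^sup>* ((i+1+Suc d) mod m, 1) ((i+1+Suc d) mod m, 4)" using inner i by simp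
    ultimately show ?case by (meson rtranclp.rtrancl_into_rtrancl rtranclp_trans)
  qed
  have "(i + 1 + (m - 1)) mod m = i" using i by simp
  then have "T\<^sup>*\<^sup>* (nx m i, 1) (i, 4)" using main[of "m - 1"] i by simp
  then show ?thesis unfolding reachable_def T_def .
qed

lemma reach_sym: "reachable V (\<lambda>x y. E x y \<and> {x,y} \<noteq> {u,v}) a b \<Longrightarrow> (\<And>x y. E x y \<Longrightarrow> E y x) \<Longrightarrow>
   reachable V (\<lambda>x y. E x y \<and> {x,y} \<noteq> {u,v}) b a"
proof -
  assume r: "reachable V (\<lambda>x y. E x y \<and> {x,y} \<noteq> {u,v}) a b" and s: "\<And>x y. E x y \<Longrightarrow> E y x"
  have "symp (\<lambda>x y. x \<in> V \<and> y \<in> V \<and> (E x y \<and> {x,y} \<noteq> {u,v}))"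
    by (rule sympI) (auto simp: insert_commute s)
  then have "symp (\<lambda>x y. x \<in> V \<and> y \<in> V \<and> (E x y \<and> {x,y} \<noteq> {u,v}))\<^sup>*\<^sup>*" by (rule symp_rtranclp)
  then show ?thesis using r unfolding reachable_def by (meson sympD)
qed

lemma G1_int_12: "i < m \<Longrightarrow> reachable (ring_V m) (\<lambda>x y. G1_E m x y \<and> {x,y} \<noteq> {(i,1),(i,2)}) (i,1) (i,2)"
  unfolding reachable_def by (rule path2[of _ _ "(i,6)"]) (auto simp: G1_simps ring_V_def doubleton_eq_iff)
lemma G1_int_21: "i < m \<Longrightarrow> reachable (ring_V m) (\<lambda>x y. G1_E m x y \<and> {x,y} \<noteq> {(i,2),(i,1)}) (i,2) (i,1)"
  unfolding reachable_def by (rule path2[of _ _ "(i,6)"]) (auto simp: G1_simps ring_V_def doubleton_eq_iff)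
lemma G1_int_23: "i < m \<Longrightarrow> reachable (ring_V m) (\<lambda>x y. G1_E m x y \<and> {x,y} \<noteq> {(i,2),(i,3)}) (i,2) (i,3)"
  unfolding reachable_def by (rule path3[of _ _ "(i,6)" "(i,5)"]) (auto simp: G1_simps ring_V_def doubleton_eq_iff)
lemma G1_int_32: "i < m \<Longrightarrow> reachable (ring_V m) (\<lambda>x y. G1_E m x y \<and> {x,y} \<noteq> {(i,3),(i,2)}) (i,3) (i,2)"
  unfolding reachable_def by (rule path3[of _ _ "(i,5)" "(i,6)"]) (auto simp: G1_simps ring_V_def doubleton_eq_iff)
lemma G1_int_34: "i < m \<Longrightarrow> reachable (ring_V m) (\<lambda>x y. G1_E m x y \<and> {x,y} \<noteq> {(i,3),(i,4)}) (i,3) (i,4)"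
  unfolding reachable_def by (rule path2[of _ _ "(i,5)"]) (auto simp: G1_simps ring_V_def doubleton_eq_iff)
lemma G1_int_43: "i < m \<Longrightarrow> reachable (ring_V m) (\<lambda>x y. G1_E m x y \<and> {x,y} \<noteq> {(i,4),(i,3)}) (i,4) (i,3)"
  unfolding reachable_def by (rule path2[of _ _ "(i,5)"]) (auto simp: G1_simps ring_V_def doubleton_eq_iff)
lemma G1_int_45: "i < m \<Longrightarrow> reachable (ring_V m) (\<lambda>x y. G1_E m x y \<and> {x,y} \<noteq> {(i,4),(i,5)}) (i,4) (i,5)"
  unfolding reachable_def by (rule path2[of _ _ "(i,3)"]) (auto simp: G1_simps ring_V_def doubleton_eq_iff)
lemma G1_int_54: "i < m \<Longrightarrow> reachable (ring_V m) (\<lambda>x y. G1_E m x y \<and> {x,y} \<noteq> {(i,5),(i,4)}) (i,5) (i,4)"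
  unfolding reachable_def by (rule path2[of _ _ "(i,3)"]) (auto simp: G1_simps ring_V_def doubleton_eq_iff)
lemma G1_int_56: "i < m \<Longrightarrow> reachable (ring_V m) (\<lambda>x y. G1_E m x y \<and> {x,y} \<noteq> {(i,5),(i,6)}) (i,5) (i,6)"
  unfolding reachable_def by (rule path3[of _ _ "(i,3)" "(i,2)"]) (auto simp: G1_simps ring_V_def doubleton_eq_iff)
lemma G1_int_65: "i < m \<Longrightarrow> reachable (ring_V m) (\<lambda>x y. G1_E m x y \<and> {x,y} \<noteq> {(i,6),(i,5)}) (i,6) (i,5)"
  unfolding reachable_def by (rule path3[of _ _ "(i,2)" "(i,3)"]) (auto simp: G1_simps ring_V_def doubleton_eq_iff)
lemma G1_int_61: "i < m \<Longrightarrow> reachable (ring_V m) (\<lambda>x y. G1_E m x y \<and> {x,y} \<noteq> {(i,6),(i,1)}) (i,6) (i,1)"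
  unfolding reachable_def by (rule path2[of _ _ "(i,2)"]) (auto simp: G1_simps ring_V_def doubleton_eq_iff)
lemma G1_int_16: "i < m \<Longrightarrow> reachable (ring_V m) (\<lambda>x y. G1_E m x y \<and> {x,y} \<noteq> {(i,1),(i,6)}) (i,1) (i,6)"
  unfolding reachable_def by (rule path2[of _ _ "(i,2)"]) (auto simp: G1_simps ring_V_def doubleton_eq_iff)
lemma G1_int_26: "i < m \<Longrightarrow> reachable (ring_V m) (\<lambda>x y. G1_E m x y \<and> {x,y} \<noteq> {(i,2),(i,6)}) (i,2) (i,6)"
  unfolding reachable_def by (rule path2[of _ _ "(i,1)"]) (auto simp: G1_simps ring_V_def doubleton_eq_iff)
lemma G1_int_62: "i < m \<Longrightarrow> reachable (ring_V m) (\<lambda>x y. G1_E m x y \<and> {x,y} \<noteq> {(i,6),(i,2)}) (i,6) (i,2)"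
  unfolding reachable_def by (rule path2[of _ _ "(i,1)"]) (auto simp: G1_simps ring_V_def doubleton_eq_iff)
lemma G1_int_35: "i < m \<Longrightarrow> reachable (ring_V m) (\<lambda>x y. G1_E m x y \<and> {x,y} \<noteq> {(i,3),(i,5)}) (i,3) (i,5)"
  unfolding reachable_def by (rule path2[of _ _ "(i,4)"]) (auto simp: G1_simps ring_V_def doubleton_eq_iff)
lemma G1_int_53: "i < m \<Longrightarrow> reachable (ring_V m) (\<lambda>x y. G1_E m x y \<and> {x,y} \<noteq> {(i,5),(i,3)}) (i,5) (i,3)"
  unfolding reachable_def by (rule path2[of _ _ "(i,4)"]) (auto simp: G1_simps ring_V_def doubleton_eq_iff)
lemmas G1_ints = G1_int_12 G1_int_21 G1_int_23 G1_int_32 G1_int_34 G1_int_43 G1_int_45 G1_int_54 G1_int_56 G1_int_65 G1_int_61 G1_int_16 G1_int_26 G1_int_62 G1_int_35 G1_int_53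

lemma G2_int_12: "i < m \<Longrightarrow> reachable (ring_V m) (\<lambda>x y. G2_E m x y \<and> {x,y} \<noteq> {(i,1),(i,2)}) (i,1) (i,2)"
  unfolding reachable_def by (rule path3[of _ _ "(i,6)" "(i,3)"]) (auto simp: G2_simps ring_V_def doubleton_eq_iff)
lemma G2_int_21: "i < m \<Longrightarrow> reachable (ring_V m) (\<lambda>x y. G2_E m x y \<and> {x,y} \<noteq> {(i,2),(i,1)}) (i,2) (i,1)"
  unfolding reachable_def by (rule path3[of _ _ "(i,3)" "(i,6)"]) (auto simp: G2_simps ring_V_def doubleton_eq_iff)
lemma G2_int_23: "i < m \<Longrightarrow> reachable (ring_V m) (\<lambda>x y. G2_E m x y \<and> {x,y} \<noteq> {(i,2),(i,3)}) (i,2) (i,3)"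
  unfolding reachable_def by (rule path3[of _ _ "(i,1)" "(i,6)"]) (auto simp: G2_simps ring_V_def doubleton_eq_iff)
lemma G2_int_32: "i < m \<Longrightarrow> reachable (ring_V m) (\<lambda>x y. G2_E m x y \<and> {x,y} \<noteq> {(i,3),(i,2)}) (i,3) (i,2)"
  unfolding reachable_def by (rule path3[of _ _ "(i,4)" "(i,5)"]) (auto simp: G2_simps ring_V_def doubleton_eq_iff)
lemma G2_int_34: "i < m \<Longrightarrow> reachable (ring_V m) (\<lambda>x y. G2_E m x y \<and> {x,y} \<noteq> {(i,3),(i,4)}) (i,3) (i,4)"
  unfolding reachable_def by (rule path3[of _ _ "(i,2)" "(i,5)"]) (auto simp: G2_simps ring_V_def doubleton_eq_iff)
lemma G2_int_43: "i < m \<Longrightarrow> reachable (ring_V m) (\<lambda>x y. G2_E m x y \<and> {x,y} \<noteq> {(i,4),(i,3)}) (i,4) (i,3)"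
  unfolding reachable_def by (rule path3[of _ _ "(i,5)" "(i,2)"]) (auto simp: G2_simps ring_V_def doubleton_eq_iff)
lemma G2_int_45: "i < m \<Longrightarrow> reachable (ring_V m) (\<lambda>x y. G2_E m x y \<and> {x,y} \<noteq> {(i,4),(i,5)}) (i,4) (i,5)"
  unfolding reachable_def by (rule path3[of _ _ "(i,3)" "(i,2)"]) (auto simp: G2_simps ring_V_def doubleton_eq_iff)
lemma G2_int_54: "i < m \<Longrightarrow> reachable (ring_V m) (\<lambda>x y. G2_E m x y \<and> {x,y} \<noteq> {(i,5),(i,4)}) (i,5) (i,4)"
  unfolding reachable_def by (rule path3[of _ _ "(i,2)" "(i,3)"]) (auto simp: G2_simps ring_V_def doubleton_eq_iff)
lemma G2_int_56: "i < m \<Longrightarrow> reachable (ring_V m) (\<lambda>x y. G2_E m x y \<and> {x,y} \<noteq> {(i,5),(i,6)}) (i,5) (i,6)"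
  unfolding reachable_def by (rule path3[of _ _ "(i,2)" "(i,1)"]) (auto simp: G2_simps ring_V_def doubleton_eq_iff)
lemma G2_int_65: "i < m \<Longrightarrow> reachable (ring_V m) (\<lambda>x y. G2_E m x y \<and> {x,y} \<noteq> {(i,6),(i,5)}) (i,6) (i,5)"
  unfolding reachable_def by (rule path3[of _ _ "(i,1)" "(i,2)"]) (auto simp: G2_simps ring_V_def doubleton_eq_iff)
lemma G2_int_61: "i < m \<Longrightarrow> reachable (ring_V m) (\<lambda>x y. G2_E m x y \<and> {x,y} \<noteq> {(i,6),(i,1)}) (i,6) (i,1)"
  unfolding reachable_def by (rule path3[of _ _ "(i,3)" "(i,2)"]) (auto simp: G2_simps ring_V_def doubleton_eq_iff)
lemma G2_int_16: "i < m \<Longrightarrow> reachable (ring_V m) (\<lambda>x y. G2_E m x y \<and> {x,y} \<noteq> {(i,1),(i,6)}) (i,1) (i,6)"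
  unfolding reachable_def by (rule path3[of _ _ "(i,2)" "(i,3)"]) (auto simp: G2_simps ring_V_def doubleton_eq_iff)
lemma G2_int_25: "i < m \<Longrightarrow> reachable (ring_V m) (\<lambda>x y. G2_E m x y \<and> {x,y} \<noteq> {(i,2),(i,5)}) (i,2) (i,5)"
  unfolding reachable_def by (rule path3[of _ _ "(i,1)" "(i,6)"]) (auto simp: G2_simps ring_V_def doubleton_eq_iff)
lemma G2_int_52: "i < m \<Longrightarrow> reachable (ring_V m) (\<lambda>x y. G2_E m x y \<and> {x,y} \<noteq> {(i,5),(i,2)}) (i,5) (i,2)"
  unfolding reachable_def by (rule path3[of _ _ "(i,4)" "(i,3)"]) (auto simp: G2_simps ring_V_def doubleton_eq_iff)
lemma G2_int_36: "i < m \<Longrightarrow> reachable (ring_V m) (\<lambda>x y. G2_E m x y \<and> {x,y} \<noteq> {(i,3),(i,6)}) (i,3) (i,6)"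
  unfolding reachable_def by (rule path3[of _ _ "(i,2)" "(i,1)"]) (auto simp: G2_simps ring_V_def doubleton_eq_iff)
lemma G2_int_63: "i < m \<Longrightarrow> reachable (ring_V m) (\<lambda>x y. G2_E m x y \<and> {x,y} \<noteq> {(i,6),(i,3)}) (i,6) (i,3)"
  unfolding reachable_def by (rule path3[of _ _ "(i,1)" "(i,2)"]) (auto simp: G2_simps ring_V_def doubleton_eq_iff)
lemmas G2_ints = G2_int_12 G2_int_21 G2_int_23 G2_int_32 G2_int_34 G2_int_43 G2_int_45 G2_int_54 G2_int_56 G2_int_65 G2_int_61 G2_int_16 G2_int_25 G2_int_52 G2_int_36 G2_int_63


lemma G1_bridgeless: "bridgeless (ring_V m) (G1_E m)"
  unfolding bridgeless_def
proof (intro notI, elim exE)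
  fix u v assume b: "is_bridge (ring_V m) (G1_E m) u v"
  then have uV: "u \<in> ring_V m" and e: "G1_E m u v"
    and nr: "\<not> reachable (ring_V m) (\<lambda>x y. G1_E m x y \<and> {x,y} \<noteq> {u,v}) u v"
    unfolding is_bridge_def by auto
  have sym: "\<And>x y. G1_E m x y \<Longrightarrow> G1_E m y x" using G1_simple[of m] unfolding simple_graph_def by blast
  have Hs: "H4 1 2" "H4 2 3" "H4 3 4" by (simp_all add: H4_iff)
  from uV show False
  proof (rule ringV_cases)
    fix i j assume u: "u = (i,j)" and i: "i < m" and j: "j \<in> {1,2,3,4,5,6}"
    have r1: "reachable (ring_V m) (\<lambda>x y. G1_E m x y \<and> {x,y} \<noteq> {(i,4),(nx m i,1)}) (i,4) (nx m i,1)"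
      by (rule reach_sym[OF ring_reach[OF Hs i] sym])
    have r2: "reachable (ring_V m) (\<lambda>x y. G1_E m x y \<and> {x,y} \<noteq> {(i,1),(pr m i,4)}) (i,1) (pr m i,4)"
    proof -
      have p: "pr m i < m" using i by (rule pr_lt)
      have eq: "{(pr m i,4),(nx m (pr m i),1)} = {(i,1::nat),(pr m i,4::nat)}" using nx_pr[OF i] by auto
      have "reachable (ring_V m) (\<lambda>x y. G1_E m x y \<and> {x,y} \<noteq> {(pr m i,4),(nx m (pr m i),1)}) (nx m (pr m i),1) (pr m i,4)"
        by (rule ring_reach[OF Hs p])
      then have "reachable (ring_V m) (\<lambda>x y. G1_E m x y \<and> {x,y} \<noteq> {(i,1),(pr m i,4)}) (nx m (pr m i),1) (pr m i,4)"
        by (simp only: eq)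
      then show ?thesis by (simp only: nx_pr[OF i])
    qed
    have "reachable (ring_V m) (\<lambda>x y. G1_E m x y \<and> {x,y} \<noteq> {u,v}) u v"
      using j e r1 r2 G1_ints[OF i] unfolding u
      by (simp only: insert_iff empty_iff simp_thms) (elim disjE; simp only: G1_simps; auto)
    then show False using nr by simp
  qed
qed

lemma G2_bridgeless: "bridgeless (ring_V m) (G2_E m)"
  unfolding bridgeless_def
proof (intro notI, elim exE)
  fix u v assume b: "is_bridge (ring_V m) (G2_E m) u v"
  then have uV: "u \<in> ring_V m" and e: "G2_E m u v"
    and nr: "\<not> reachable (ring_V m) (\<lambda>x y. G2_E m x y \<and> {x,y} \<noteq> {u,v}) u v"
    unfolding is_bridge_def by auto
  have sym: "\<And>x y. G2_E m x y \<Longrightarrow> G2_E m y x" using G2_simple[of m] unfolding simple_graph_def by blast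
  have Hs: "H2 1 2" "H2 2 3" "H2 3 4" by (simp_all add: H2_iff)
  from uV show False
  proof (rule ringV_cases)
    fix i j assume u: "u = (i,j)" and i: "i < m" and j: "j \<in> {1,2,3,4,5,6}"
    have r1: "reachable (ring_V m) (\<lambda>x y. G2_E m x y \<and> {x,y} \<noteq> {(i,4),(nx m i,1)}) (i,4) (nx m i,1)"
      by (rule reach_sym[OF ring_reach[OF Hs i] sym])
    have r2: "reachable (ring_V m) (\<lambda>x y. G2_E m x y \<and> {x,y} \<noteq> {(i,1),(pr m i,4)}) (i,1) (pr m i,4)"
    proof -
      have p: "pr m i < m" using i by (rule pr_lt)
      have eq: "{(pr m i,4),(nx m (pr m i),1)} = {(i,1::nat),(pr m i,4::nat)}" using nx_pr[OF i] by auto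
      have "reachable (ring_V m) (\<lambda>x y. G2_E m x y \<and> {x,y} \<noteq> {(pr m i,4),(nx m (pr m i),1)}) (nx m (pr m i),1) (pr m i,4)"
        by (rule ring_reach[OF Hs p])
      then have "reachable (ring_V m) (\<lambda>x y. G2_E m x y \<and> {x,y} \<noteq> {(i,1),(pr m i,4)}) (nx m (pr m i),1) (pr m i,4)"
        by (simp only: eq)
      then show ?thesis by (simp only: nx_pr[OF i])
    qed
    have "reachable (ring_V m) (\<lambda>x y. G2_E m x y \<and> {x,y} \<noteq> {u,v}) u v"
      using j e r1 r2 G2_ints[OF i] unfolding u
      by (simp only: insert_iff empty_iff simp_thms) (elim disjE; simp only: G2_simps; auto)
    then show False using nr by simp
  qed
qed

lemma conv_sub: "S \<subseteq> V \<Longrightarrow> conv_step V E S \<subseteq> V"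
  by (auto simp: conv_step_def)

lemma conv_mono:
  assumes VE: "\<And>x y. E x y \<Longrightarrow> y \<in> V" and fin: "finite V" and sub: "S \<subseteq> S'"
  shows "conv_step V E S \<subseteq> conv_step V E S'"
proof
  fix v assume v: "v \<in> conv_step V E S"
  show "v \<in> conv_step V E S'"
  proof (cases "v \<in> S")
    case True then show ?thesis using sub by (auto simp: conv_step_def)
  next
    case False
    then have v2: "v \<in> V" "2 \<le> card {u \<in> S. E v u}" using v by (auto simp: conv_step_def)
    have "finite {u \<in> S'. E v u}" by (rule finite_subset[OF _ fin]) (auto dest: VE)
    then have "card {u \<in> S. E v u} \<le> card {u \<in> S'. E v u}" by (rule card_mono) (use sub in auto)
    then show ?thesis using v2 by (auto simp: conv_step_def)
  qed
qed

lemma card2: "finite A \<Longrightarrow> a \<in> A \<Longrightarrow> b \<in> A \<Longrightarrow> a \<noteq> b \<Longrightarrow> 2 \<le> card A"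
proof -
  assume h: "finite A" "a \<in> A" "b \<in> A" "a \<noteq> b"
  have "card {a,b} \<le> card A" by (rule card_mono) (use h in auto)
  then show ?thesis using h by simp
qed

lemma in_conv2: "v \<in> V \<Longrightarrow> finite S \<Longrightarrow> a \<in> S \<Longrightarrow> b \<in> S \<Longrightarrow> E v a \<Longrightarrow> E v b \<Longrightarrow> a \<noteq> b \<Longrightarrow> v \<in> conv_step V E S"
proof -
  assume h: "v \<in> V" "finite S" "a \<in> S" "b \<in> S" "E v a" "E v b" "a \<noteq> b"
  have "2 \<le> card {u \<in> S. E v u}" by (rule card2[of _ a b]) (use h in auto)
  then show ?thesis using h by (auto simp: conv_step_def)
qed

lemma in_conv1: "v \<in> S \<Longrightarrow> v \<in> conv_step V E S"
  by (simp add: conv_step_def)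

lemma upper:
  assumes VE: "\<And>x y. E x y \<Longrightarrow> y \<in> V" and fin: "finite V" and S0: "S0 \<subseteq> V"
    and T1: "TT \<subseteq> conv_step V E S0" and T2: "V \<subseteq> conv_step V E TT"
  shows "conversion_set V E S0"
  unfolding conversion_set_def
proof (intro conjI exI)
  show "S0 \<subseteq> V" by fact
  have "conv_step V E TT \<subseteq> conv_step V E (conv_step V E S0)" by (rule conv_mono[OF VE fin T1])
  moreover have "conv_step V E (conv_step V E S0) \<subseteq> V" by (intro conv_sub S0)
  ultimately show "(conv_step V E ^^ 2) S0 = V" using T2 by (simp add: numeral_2_eq_2)
qed

lemma trap:
  assumes VE: "\<And>x y. E x y \<Longrightarrow> y \<in> V" and fin: "finite V" and CS: "C \<inter> S = {}"
    and tr: "\<And>v u1 u2. v \<in> C \<Longrightarrow> E v u1 \<Longrightarrow> u1 \<notin> C \<Longrightarrow> E v u2 \<Longrightarrow> u2 \<notin> C \<Longrightarrow> u1 = u2"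
  shows "C \<inter> (conv_step V E ^^ t) S = {}"
proof (induction t)
  case 0 then show ?case using CS by simp
next
  case (Suc t)
  let ?X = "(conv_step V E ^^ t) S"
  have "v \<notin> conv_step V E ?X" if v: "v \<in> C" for v
  proof
    assume vin: "v \<in> conv_step V E ?X"
    have "v \<notin> ?X" using Suc v by blast
    then have c2: "2 \<le> card {u \<in> ?X. E v u}" using vin by (auto simp: conv_step_def)
    have sub: "{u \<in> ?X. E v u} \<subseteq> {u \<in> V. E v u \<and> u \<notin> C}" using Suc VE by blast
    have fin2: "finite {u \<in> V. E v u \<and> u \<notin> C}" using fin by simp
    have "card {u \<in> V. E v u \<and> u \<notin> C} \<le> Suc 0"
      using card_le_Suc0_iff_eq[OF fin2] tr[OF v] by blast
    moreover have "card {u \<in> ?X. E v u} \<le> card {u \<in> V. E v u \<and> u \<notin> C}" by (rule card_mono[OF fin2 sub])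
    ultimately show False using c2 by simp
  qed
  then show ?case by auto
qed

lemma lower:
  assumes VE: "\<And>x y. E x y \<Longrightarrow> y \<in> ring_V m"
    and traps: "\<And>i j. i < m \<Longrightarrow> j \<in> {1..6} \<Longrightarrow> \<exists>C. C \<subseteq> {i} \<times> {1..6} \<and> (i,j) \<notin> C \<and> C \<noteq> {} \<and>
        (\<forall>v u1 u2. v \<in> C \<longrightarrow> E v u1 \<longrightarrow> u1 \<notin> C \<longrightarrow> E v u2 \<longrightarrow> u2 \<notin> C \<longrightarrow> u1 = u2)"
    and cs: "conversion_set (ring_V m) E S"
  shows "2 * m \<le> card S"
proof -
  define A where "A i = S \<inter> ({i} \<times> {1..6})" for i :: nat
  have SV: "S \<subseteq> ring_V m" using cs by (simp add: conversion_set_def)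
  obtain t where t: "(conv_step (ring_V m) E ^^ t) S = ring_V m" using cs by (auto simp: conversion_set_def)
  have finV: "finite (ring_V m)" by (simp add: ring_V_def)
  have Seq: "S = (\<Union>i\<in>{..<m}. A i)" using SV by (auto simp: A_def ring_V_def)
  have finA: "\<forall>i\<in>{..<m}. finite (A i)" by (simp add: A_def)
  have disj: "\<forall>i\<in>{..<m}. \<forall>j\<in>{..<m}. i \<noteq> j \<longrightarrow> A i \<inter> A j = {}" by (auto simp: A_def)
  have cardS: "card S = (\<Sum>i<m. card (A i))"
    unfolding Seq by (rule card_UN_disjoint[OF _ finA disj]) simp
  have each: "2 \<le> card (A i)" if i: "i < m" for i
  proof (rule ccontr)
    assume "\<not> 2 \<le> card (A i)"
    then have c1: "card (A i) \<le> Suc 0" by simp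
    obtain j where j: "j \<in> {1..6}" "A i \<subseteq> {(i,j)}"
    proof (cases "A i = {}")
      case True then show ?thesis using that[of 1] by simp
    next
      case False
      then obtain x where x: "x \<in> A i" by blast
      have "finite (A i)" by (simp add: A_def)
      then have "\<forall>a\<in>A i. \<forall>b\<in>A i. a = b" using c1 card_le_Suc0_iff_eq by blast
      then have "A i = {x}" using x by blast
      moreover obtain j where "x = (i,j)" "j \<in> {1..6}" using x by (auto simp: A_def)
      ultimately show ?thesis using that by blast
    qed
    obtain C where C: "C \<subseteq> {i} \<times> {1..6}" "(i,j) \<notin> C" "C \<noteq> {}"
      and tr: "\<forall>v u1 u2. v \<in> C \<longrightarrow> E v u1 \<longrightarrow> u1 \<notin> C \<longrightarrow> E v u2 \<longrightarrow> u2 \<notin> C \<longrightarrow> u1 = u2"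
      using traps[OF i j(1)] by blast
    have "C \<inter> S = {}"
    proof -
      have "C \<inter> S \<subseteq> A i" using C(1) by (auto simp: A_def)
      then show ?thesis using j(2) C(2) by blast
    qed
    then have "C \<inter> (conv_step (ring_V m) E ^^ t) S = {}"
      by (intro trap[OF VE finV]) (use tr in blast)+
    moreover have "C \<subseteq> ring_V m" using C(1) i by (auto simp: ring_V_def)
    ultimately show False using t C(3) by auto
  qed
  have "(\<Sum>i<m. 2) \<le> (\<Sum>i<m. card (A i))" by (rule sum_mono) (simp add: each)
  then show ?thesis using cardS by simp
qed

lemma c2_eq:
  assumes VE: "\<And>x y. E x y \<Longrightarrow> y \<in> ring_V m"
    and traps: "\<And>i j. i < m \<Longrightarrow> j \<in> {1..6} \<Longrightarrow> \<exists>C. C \<subseteq> {i} \<times> {1..6} \<and> (i,j) \<notin> C \<and> C \<noteq> {} \<and>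
        (\<forall>v u1 u2. v \<in> C \<longrightarrow> E v u1 \<longrightarrow> u1 \<notin> C \<longrightarrow> E v u2 \<longrightarrow> u2 \<notin> C \<longrightarrow> u1 = u2)"
    and up: "conversion_set (ring_V m) E S0" and cS0: "card S0 = 2 * m"
  shows "c2 (ring_V m) E = 2 * m"
  unfolding c2_def
proof (rule Least_equality)
  show "\<exists>S. conversion_set (ring_V m) E S \<and> card S = 2 * m" using up cS0 by blast
  fix k assume "\<exists>S. conversion_set (ring_V m) E S \<and> card S = k"
  then obtain S where S: "conversion_set (ring_V m) E S" "card S = k" by blast
  have "2 * m \<le> card S" using VE traps S(1) by (rule lower)
  then show "2 * m \<le> k" using S(2) by simp
qed

lemma arith_final: "int (2 * m) - \<lceil>(real (m * 6) + 2) / 4\<rceil> = \<lfloor>(real m - 1) / 2\<rfloor>"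
proof -
  obtain k where k: "m = 2 * k \<or> m = 2 * k + 1" by (metis odd_two_times_div_two_succ even_two_times_div_two)
  then show ?thesis
  proof
    assume m: "m = 2 * k"
    have c: "\<lceil>(real (m * 6) + 2) / 4\<rceil> = int (3 * k + 1)" by (rule ceiling_unique) (simp_all add: m)
    have f: "\<lfloor>(real m - 1) / 2\<rfloor> = int k - 1" by (rule floor_unique) (simp_all add: m)
    show ?thesis using c f m by simp
  next
    assume m: "m = 2 * k + 1"
    have c: "\<lceil>(real (m * 6) + 2) / 4\<rceil> = int (3 * k + 2)" by (rule ceiling_unique) (simp_all add: m)
    have f: "\<lfloor>(real m - 1) / 2\<rfloor> = int k" by (rule floor_unique) (simp_all add: m)
    show ?thesis using c f m by simp
  qed
qed

lemma G1_trap0: "\<forall>v u1 u2. v \<in> {i} \<times> {3,4,5} \<longrightarrow> G1_E m v u1 \<longrightarrow> u1 \<notin> {i} \<times> {3,4,5} \<longrightarrow> G1_E m v u2 \<longrightarrow> u2 \<notin> {i} \<times> {3,4,5} \<longrightarrow> u1 = u2"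
  by (auto simp: G1_simps)
lemma G1_trap1: "\<forall>v u1 u2. v \<in> {i} \<times> {1,2,6} \<longrightarrow> G1_E m v u1 \<longrightarrow> u1 \<notin> {i} \<times> {1,2,6} \<longrightarrow> G1_E m v u2 \<longrightarrow> u2 \<notin> {i} \<times> {1,2,6} \<longrightarrow> u1 = u2"
  by (auto simp: G1_simps)
lemma G1_traps: "i < m \<Longrightarrow> j \<in> {1..6} \<Longrightarrow> \<exists>C. C \<subseteq> {i} \<times> {1..6} \<and> (i,j) \<notin> C \<and> C \<noteq> {} \<and>
        (\<forall>v u1 u2. v \<in> C \<longrightarrow> G1_E m v u1 \<longrightarrow> u1 \<notin> C \<longrightarrow> G1_E m v u2 \<longrightarrow> u2 \<notin> C \<longrightarrow> u1 = u2)"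
proof -
  assume i: "i < m" and j: "j \<in> {1..6}"
  have "j \<in> {1,2,3,4,5,6}" using j by (rule six)
  then consider "j \<in> {1,2,6}" | "j \<in> {3,4,5}" by blast
  then show ?thesis
  proof cases
    case 1
    show ?thesis
    proof (rule exI[of _ "{i} \<times> {3,4,5}"], intro conjI)
      show "{i} \<times> {3::nat,4,5} \<subseteq> {i} \<times> {1..6}" by auto
      show "(i,j) \<notin> {i} \<times> {3::nat,4,5}" using 1 by auto
      show "{i} \<times> {3::nat,4,5} \<noteq> {}" by simp
    qed (rule G1_trap0)
  next
    case 2
    show ?thesis
    proof (rule exI[of _ "{i} \<times> {1,2,6}"], intro conjI)
      show "{i} \<times> {1::nat,2,6} \<subseteq> {i} \<times> {1..6}" by auto
      show "(i,j) \<notin> {i} \<times> {1::nat,2,6}" using 2 by auto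
      show "{i} \<times> {1::nat,2,6} \<noteq> {}" by simp
    qed (rule G1_trap1)
  qed
qed

lemma G1_up: "conversion_set (ring_V m) (G1_E m) ({..<m} \<times> {2,5})"
proof (rule upper[where TT="{..<m} \<times> {2,3,5,6}"])
  show "\<And>x y. G1_E m x y \<Longrightarrow> y \<in> ring_V m" by (simp add: ring_E_def)
  show "finite (ring_V m)" by (simp add: ring_V_def)
  show "{..<m} \<times> {2,5} \<subseteq> ring_V m" by (auto simp: ring_V_def)
  have fS: "finite ({..<m} \<times> {2,5})" by simp
  have fT: "finite ({..<m} \<times> {2,3,5,6})" by simp
  have t3: "(i,3) \<in> conv_step (ring_V m) (G1_E m) ({..<m} \<times> {2,5})" if i: "i < m" for i
    by (rule in_conv2[of _ _ _ "(i,2)" "(i,5)"]) (use i fS in \<open>auto simp: ring_V_def G1_simps\<close>)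
  have t6: "(i,6) \<in> conv_step (ring_V m) (G1_E m) ({..<m} \<times> {2,5})" if i: "i < m" for i
    by (rule in_conv2[of _ _ _ "(i,5)" "(i,2)"]) (use i fS in \<open>auto simp: ring_V_def G1_simps\<close>)
  show "{..<m} \<times> {2,3,5,6} \<subseteq> conv_step (ring_V m) (G1_E m) ({..<m} \<times> {2,5})"
  proof (clarify)
    fix i j :: nat assume "i < m" "j \<in> {2,3,5,6}"
    then show "(i,j) \<in> conv_step (ring_V m) (G1_E m) ({..<m} \<times> {2,5})"
      using t3 t6 by (auto intro: in_conv1)
  qed
  have u1: "(i,1) \<in> conv_step (ring_V m) (G1_E m) ({..<m} \<times> {2,3,5,6})" if i: "i < m" for i
    by (rule in_conv2[of _ _ _ "(i,2)" "(i,6)"]) (use i fT in \<open>auto simp: ring_V_def G1_simps\<close>)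
  have u4: "(i,4) \<in> conv_step (ring_V m) (G1_E m) ({..<m} \<times> {2,3,5,6})" if i: "i < m" for i
    by (rule in_conv2[of _ _ _ "(i,3)" "(i,5)"]) (use i fT in \<open>auto simp: ring_V_def G1_simps\<close>)
  show "ring_V m \<subseteq> conv_step (ring_V m) (G1_E m) ({..<m} \<times> {2,3,5,6})"
  proof
    fix x assume "x \<in> ring_V m"
    then show "x \<in> conv_step (ring_V m) (G1_E m) ({..<m} \<times> {2,3,5,6})"
    proof (rule ringV_cases)
      fix i j assume "x = (i,j)" "i < m" "j \<in> {1,2,3,4,5,6}"
      then show ?thesis using u1 u4 by (auto intro: in_conv1)
    qed
  qed
qed

lemma G1_c2: "c2 (ring_V m) (G1_E m) = 2 * m"
proof (rule c2_eq[OF _ _ G1_up])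
  show "\<And>x y. G1_E m x y \<Longrightarrow> y \<in> ring_V m" by (simp add: ring_E_def)
  show "\<And>i j. i < m \<Longrightarrow> j \<in> {1..6} \<Longrightarrow> \<exists>C. C \<subseteq> {i} \<times> {1..6} \<and> (i,j) \<notin> C \<and> C \<noteq> {} \<and>
        (\<forall>v u1 u2. v \<in> C \<longrightarrow> G1_E m v u1 \<longrightarrow> u1 \<notin> C \<longrightarrow> G1_E m v u2 \<longrightarrow> u2 \<notin> C \<longrightarrow> u1 = u2)"
    by (rule G1_traps)
  show "card ({..<m} \<times> {2::nat,5}) = 2 * m" by (simp add: card_cartesian_product)
qed

lemma G2_trap0: "\<forall>v u1 u2. v \<in> {i} \<times> {2,3,4,5} \<longrightarrow> G2_E m v u1 \<longrightarrow> u1 \<notin> {i} \<times> {2,3,4,5} \<longrightarrow> G2_E m v u2 \<longrightarrow> u2 \<notin> {i} \<times> {2,3,4,5} \<longrightarrow> u1 = u2"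
  by (auto simp: G2_simps)
lemma G2_trap1: "\<forall>v u1 u2. v \<in> {i} \<times> {1,2,5,6} \<longrightarrow> G2_E m v u1 \<longrightarrow> u1 \<notin> {i} \<times> {1,2,5,6} \<longrightarrow> G2_E m v u2 \<longrightarrow> u2 \<notin> {i} \<times> {1,2,5,6} \<longrightarrow> u1 = u2"
  by (auto simp: G2_simps)
lemma G2_trap2: "\<forall>v u1 u2. v \<in> {i} \<times> {3,4,5,6} \<longrightarrow> G2_E m v u1 \<longrightarrow> u1 \<notin> {i} \<times> {3,4,5,6} \<longrightarrow> G2_E m v u2 \<longrightarrow> u2 \<notin> {i} \<times> {3,4,5,6} \<longrightarrow> u1 = u2"
  by (auto simp: G2_simps)
lemma G2_trap3: "\<forall>v u1 u2. v \<in> {i} \<times> {1,2,3,6} \<longrightarrow> G2_E m v u1 \<longrightarrow> u1 \<notin> {i} \<times> {1,2,3,6} \<longrightarrow> G2_E m v u2 \<longrightarrow> u2 \<notin> {i} \<times> {1,2,3,6} \<longrightarrow> u1 = u2"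
  by (auto simp: G2_simps)
lemma G2_traps: "i < m \<Longrightarrow> j \<in> {1..6} \<Longrightarrow> \<exists>C. C \<subseteq> {i} \<times> {1..6} \<and> (i,j) \<notin> C \<and> C \<noteq> {} \<and>
        (\<forall>v u1 u2. v \<in> C \<longrightarrow> G2_E m v u1 \<longrightarrow> u1 \<notin> C \<longrightarrow> G2_E m v u2 \<longrightarrow> u2 \<notin> C \<longrightarrow> u1 = u2)"
proof -
  assume i: "i < m" and j: "j \<in> {1..6}"
  have "j \<in> {1,2,3,4,5,6}" using j by (rule six)
  then consider "j \<in> {1,6}" | "j \<in> {3,4}" | "j = 2" | "j = 5" by blast
  then show ?thesis
  proof cases
    case 1
    show ?thesis
    proof (rule exI[of _ "{i} \<times> {2,3,4,5}"], intro conjI)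
      show "{i} \<times> {2::nat,3,4,5} \<subseteq> {i} \<times> {1..6}" by auto
      show "(i,j) \<notin> {i} \<times> {2::nat,3,4,5}" using 1 by auto
      show "{i} \<times> {2::nat,3,4,5} \<noteq> {}" by simp
    qed (rule G2_trap0)
  next
    case 2
    show ?thesis
    proof (rule exI[of _ "{i} \<times> {1,2,5,6}"], intro conjI)
      show "{i} \<times> {1::nat,2,5,6} \<subseteq> {i} \<times> {1..6}" by auto
      show "(i,j) \<notin> {i} \<times> {1::nat,2,5,6}" using 2 by auto
      show "{i} \<times> {1::nat,2,5,6} \<noteq> {}" by simp
    qed (rule G2_trap1)
  next
    case 3
    show ?thesis
    proof (rule exI[of _ "{i} \<times> {3,4,5,6}"], intro conjI)
      show "{i} \<times> {3::nat,4,5,6} \<subseteq> {i} \<times> {1..6}" by auto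
      show "(i,j) \<notin> {i} \<times> {3::nat,4,5,6}" using 3 by auto
      show "{i} \<times> {3::nat,4,5,6} \<noteq> {}" by simp
    qed (rule G2_trap2)
  next
    case 4
    show ?thesis
    proof (rule exI[of _ "{i} \<times> {1,2,3,6}"], intro conjI)
      show "{i} \<times> {1::nat,2,3,6} \<subseteq> {i} \<times> {1..6}" by auto
      show "(i,j) \<notin> {i} \<times> {1::nat,2,3,6}" using 4 by auto
      show "{i} \<times> {1::nat,2,3,6} \<noteq> {}" by simp
    qed (rule G2_trap3)
  qed
qed

lemma G2_up: "conversion_set (ring_V m) (G2_E m) ({..<m} \<times> {2,6})"
proof (rule upper[where TT="{..<m} \<times> {1,2,3,5,6}"])
  show "\<And>x y. G2_E m x y \<Longrightarrow> y \<in> ring_V m" by (simp add: ring_E_def)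
  show "finite (ring_V m)" by (simp add: ring_V_def)
  show "{..<m} \<times> {2,6} \<subseteq> ring_V m" by (auto simp: ring_V_def)
  have fS: "finite ({..<m} \<times> {2,6})" by simp
  have fT: "finite ({..<m} \<times> {1,2,3,5,6})" by simp
  have t1: "(i,1) \<in> conv_step (ring_V m) (G2_E m) ({..<m} \<times> {2,6})" if i: "i < m" for i
    by (rule in_conv2[of _ _ _ "(i,2)" "(i,6)"]) (use i fS in \<open>auto simp: ring_V_def G2_simps\<close>)
  have t3: "(i,3) \<in> conv_step (ring_V m) (G2_E m) ({..<m} \<times> {2,6})" if i: "i < m" for i
    by (rule in_conv2[of _ _ _ "(i,2)" "(i,6)"]) (use i fS in \<open>auto simp: ring_V_def G2_simps\<close>)
  have t5: "(i,5) \<in> conv_step (ring_V m) (G2_E m) ({..<m} \<times> {2,6})" if i: "i < m" for i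
    by (rule in_conv2[of _ _ _ "(i,6)" "(i,2)"]) (use i fS in \<open>auto simp: ring_V_def G2_simps\<close>)
  show "{..<m} \<times> {1,2,3,5,6} \<subseteq> conv_step (ring_V m) (G2_E m) ({..<m} \<times> {2,6})"
  proof (clarify)
    fix i j :: nat assume "i < m" "j \<in> {1,2,3,5,6}"
    then show "(i,j) \<in> conv_step (ring_V m) (G2_E m) ({..<m} \<times> {2,6})"
      using t1 t3 t5 by (auto intro: in_conv1)
  qed
  have u4: "(i,4) \<in> conv_step (ring_V m) (G2_E m) ({..<m} \<times> {1,2,3,5,6})" if i: "i < m" for i
    by (rule in_conv2[of _ _ _ "(i,3)" "(i,5)"]) (use i fT in \<open>auto simp: ring_V_def G2_simps\<close>)
  show "ring_V m \<subseteq> conv_step (ring_V m) (G2_E m) ({..<m} \<times> {1,2,3,5,6})"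
  proof
    fix x assume "x \<in> ring_V m"
    then show "x \<in> conv_step (ring_V m) (G2_E m) ({..<m} \<times> {1,2,3,5,6})"
    proof (rule ringV_cases)
      fix i j assume "x = (i,j)" "i < m" "j \<in> {1,2,3,4,5,6}"
      then show ?thesis using u4 by (auto intro: in_conv1)
    qed
  qed
qed

lemma G2_c2: "c2 (ring_V m) (G2_E m) = 2 * m"
proof (rule c2_eq[OF _ _ G2_up])
  show "\<And>x y. G2_E m x y \<Longrightarrow> y \<in> ring_V m" by (simp add: ring_E_def)
  show "\<And>i j. i < m \<Longrightarrow> j \<in> {1..6} \<Longrightarrow> \<exists>C. C \<subseteq> {i} \<times> {1..6} \<and> (i,j) \<notin> C \<and> C \<noteq> {} \<and>
        (\<forall>v u1 u2. v \<in> C \<longrightarrow> G2_E m v u1 \<longrightarrow> u1 \<notin> C \<longrightarrow> G2_E m v u2 \<longrightarrow> u2 \<notin> C \<longrightarrow> u1 = u2)"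
    by (rule G2_traps)
  show "card ({..<m} \<times> {2::nat,6}) = 2 * m" by (simp add: card_cartesian_product)
qed


theorem proposition5p8:
  fixes m :: nat
  assumes "m \<ge> 3"
  shows "(cubic (ring_V m) (G1_E m) \<and> bridgeless (ring_V m) (G1_E m) \<and>
         class1 (ring_V m) (G1_E m) \<and> has_triangle (ring_V m) (G1_E m)) \<and>
         (cubic (ring_V m) (G2_E m) \<and> bridgeless (ring_V m) (G2_E m) \<and>
         class1 (ring_V m) (G2_E m) \<and> \<not> has_triangle (ring_V m) (G2_E m)) \<and>
         (\<forall>E \<in> {G1_E m, G2_E m}.
           int (c2 (ring_V m) E) - \<lceil>(real (card (ring_V m)) + 2) / 4\<rceil>
             = \<lfloor>(real m - 1) / 2\<rfloor>)"
proof -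
  have m0: "0 < m" using assms by simp
  have cardV: "card (ring_V m) = m * 6" by (simp add: ring_V_def card_cartesian_product)
  have F: "int (c2 (ring_V m) E) - \<lceil>(real (card (ring_V m)) + 2) / 4\<rceil> = \<lfloor>(real m - 1) / 2\<rfloor>"
    if h: "c2 (ring_V m) E = 2 * m" for E :: "nat \<times> nat \<Rightarrow> nat \<times> nat \<Rightarrow> bool"
    unfolding h cardV by (rule arith_final)
  show ?thesis
    using G1_cubic G1_bridgeless G1_class1[OF m0] G1_tri[OF m0]
      G2_cubic G2_bridgeless G2_class1[OF m0] G2_notri F[OF G1_c2] F[OF G2_c2]
    by blast
qed

end
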